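(* Let $\beta_1,\beta_2,\gamma,\rho_1,\rho_2>0$, let $\sigma_1,\sigma_2>0$ with $\sigma_1+\sigma_2=1$, let $\alpha_2\ge 0$, $\alpha_3>0$, and let $0\le u_{\max}<1$. For a point $(s,e,i,j)$ with $s,e,i,j>0$ define \[ \begin{aligned} F(s,e,i,j)=\Bigl\{z=(z_1,\dots,z_5):\ & z_1=-s\bigl(\beta_1(1-u)^2 i+\beta_2(1-u)j\bigr),\\ & z_2=s\bigl(\beta_1(1-u)^2 i+\beta_2(1-u)j\bigr)-\gamma e,\\ & z_3=\sigma_1\gamma e-\rho_1 i,\quad z_4=\sigma_2\gamma e-\rho_2 j,\\ & z_5\ge \alpha_2(e+i+j)+0.5\alpha_3u^2,\ \text{for some } u\in[0,u_{\max}]\Bigr\}\subset\mathbb{R}^5 . \end{aligned} \] Then $F(s,e,i,j)$ is a convex set for every point $(s,e,i,j)$ with positive coordinates. *)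

theory Defs
  imports "HOL-Analysis.Analysis"
begin

definition Fset ::
  "real \<Rightarrow> real \<Rightarrow> real \<Rightarrow> real \<Rightarrow> real \<Rightarrow> real \<Rightarrow> real \<Rightarrow> real \<Rightarrow> real \<Rightarrow> real \<Rightarrow> real \<Rightarrow>
   real \<Rightarrow> real \<Rightarrow> real \<Rightarrow> (real \<times> real \<times> real \<times> real \<times> real) set" where
  "Fset \<beta>1 \<beta>2 \<gamma> \<rho>1 \<rho>2 \<sigma>1 \<sigma>2 \<alpha>2 \<alpha>3 umax s e i j =
     {(z1, z2, z3, z4, z5). \<exists>u\<in>{0..umax}.
        z1 = - s * (\<beta>1 * (1 - u)^2 * i + \<beta>2 * (1 - u) * j) \<and>
        z2 = s * (\<beta>1 * (1 - u)^2 * i + \<beta>2 * (1 - u) * j) - \<gamma> * e \<and>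
        z3 = \<sigma>1 * \<gamma> * e - \<rho>1 * i \<and>
        z4 = \<sigma>2 * \<gamma> * e - \<rho>2 * j \<and>
        z5 \<ge> \<alpha>2 * (e + i + j) + 0.5 * \<alpha>3 * u^2}"

end

theory Submission
  imports Defs
begin

lemma key:
  fixes b1 b2 i j umax t u1 u2 :: real
  assumes "b1 * i > 0" "b2 * j > 0" "0 \<le> t" "t \<le> 1"
    and "0 \<le> u1" "u1 \<le> umax" "0 \<le> u2" "u2 \<le> umax" "umax < 1"
  shows "\<exists>u\<in>{0..umax}. b1 * (1 - u)^2 * i + b2 * (1 - u) * j =
           (1-t) * (b1 * (1 - u1)^2 * i + b2 * (1 - u1) * j) + t * (b1 * (1 - u2)^2 * i + b2 * (1 - u2) * j)
         \<and> u^2 \<le> (1-t) * u1^2 + t * u2^2"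
proof -
  define g where "g = (\<lambda>u::real. b1 * (1 - u)^2 * i + b2 * (1 - u) * j)"
  define W where "W = (1-t) * g u1 + t * g u2"
  define m where "m = (1-t) * u1 + t * u2"
  have m0: "0 \<le> m" and mu: "m \<le> umax" unfolding m_def using assms
    by (auto intro: add_nonneg_nonneg mult_nonneg_nonneg convex_bound_le)
  have gdec: "g u \<le> g 0" if "0 \<le> u" "u \<le> 1" for u
  proof -
    have "(1-u)^2 \<le> 1" using that by (simp add: power_le_one)
    hence "b1 * i * (1-u)^2 \<le> b1 * i" using assms(1)
      by (simp add: mult_left_le)
    moreover have "b2 * j * (1-u) \<le> b2 * j" using assms(2) that by (simp add: mult_left_le)
    ultimately show ?thesis unfolding g_def by (simp add: algebra_simps)
  qed
  have "W \<le> (1-t) * g 0 + t * g 0" unfolding W_def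
    using gdec[of u1] gdec[of u2] assms by (intro add_mono mult_left_mono) auto
  hence W0: "W \<le> g 0" by (simp add: algebra_simps)
  have sq: "((1-t)*x + t*y)^2 \<le> (1-t)*x^2 + t*y^2" for x y :: real
  proof -
    have "(1-t)*x^2 + t*y^2 - ((1-t)*x + t*y)^2 = t*(1-t)*(x-y)^2"
      by (simp add: algebra_simps power2_eq_square)
    moreover have "t*(1-t)*(x-y)^2 \<ge> 0" using assms by simp
    ultimately show ?thesis by linarith
  qed
  have "g m \<le> W"
  proof -
    have "1 - m = (1-t)*(1-u1) + t*(1-u2)" unfolding m_def by (simp add: algebra_simps)
    hence "(1-m)^2 \<le> (1-t)*(1-u1)^2 + t*(1-u2)^2" using sq by simp
    hence "b1*i*(1-m)^2 \<le> b1*i*((1-t)*(1-u1)^2 + t*(1-u2)^2)"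
      using assms(1) by (simp add: mult_left_mono)
    moreover have "b2*j*(1-m) = b2*j*((1-t)*(1-u1) + t*(1-u2))"
      unfolding m_def by (simp add: algebra_simps)
    ultimately show ?thesis unfolding g_def W_def by (simp add: algebra_simps)
  qed
  moreover have "continuous_on {0..m} g" unfolding g_def by (intro continuous_intros)
  ultimately obtain u where u: "u \<in> {0..m}" "g u = W"
    using IVT2'[of g m W 0] W0 m0 by auto
  have "u^2 \<le> m^2" using u by (simp add: power_mono)
  also have "\<dots> \<le> (1-t) * u1^2 + t * u2^2" unfolding m_def by (rule sq)
  finally show ?thesis using u mu unfolding g_def W_def by auto
qed

theorem lemma2:
  fixes \<beta>1 \<beta>2 \<gamma> \<rho>1 \<rho>2 \<sigma>1 \<sigma>2 \<alpha>2 \<alpha>3 umax :: real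
  assumes "\<beta>1 > 0" "\<beta>2 > 0" "\<gamma> > 0" "\<rho>1 > 0" "\<rho>2 > 0"
    and "\<sigma>1 > 0" "\<sigma>2 > 0" "\<sigma>1 + \<sigma>2 = 1"
    and "\<alpha>2 \<ge> 0" "\<alpha>3 > 0"
    and "0 \<le> umax" "umax < 1"
  shows "\<forall>s e i j :: real. s > 0 \<and> e > 0 \<and> i > 0 \<and> j > 0 \<longrightarrow>
           convex (Fset \<beta>1 \<beta>2 \<gamma> \<rho>1 \<rho>2 \<sigma>1 \<sigma>2 \<alpha>2 \<alpha>3 umax s e i j)"
proof (intro allI impI)
  fix s e i j :: real
  assume pos: "s > 0 \<and> e > 0 \<and> i > 0 \<and> j > 0"
  let ?G = "\<lambda>u. \<beta>1 * (1 - u)^2 * i + \<beta>2 * (1 - u) * j"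
  show "convex (Fset \<beta>1 \<beta>2 \<gamma> \<rho>1 \<rho>2 \<sigma>1 \<sigma>2 \<alpha>2 \<alpha>3 umax s e i j)"
    unfolding convex_alt
  proof (intro ballI allI impI)
    fix x y and t :: real
    assume x: "x \<in> Fset \<beta>1 \<beta>2 \<gamma> \<rho>1 \<rho>2 \<sigma>1 \<sigma>2 \<alpha>2 \<alpha>3 umax s e i j"
      and y: "y \<in> Fset \<beta>1 \<beta>2 \<gamma> \<rho>1 \<rho>2 \<sigma>1 \<sigma>2 \<alpha>2 \<alpha>3 umax s e i j"
      and t: "0 \<le> t \<and> t \<le> 1"
    obtain x1 x2 x3 x4 x5 where xe: "x = (x1,x2,x3,x4,x5)" by (cases x) auto
    obtain y1 y2 y3 y4 y5 where ye: "y = (y1,y2,y3,y4,y5)" by (cases y) auto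
    obtain u1 where u1: "u1 \<in> {0..umax}" "x1 = - s * ?G u1" "x2 = s * ?G u1 - \<gamma> * e"
      "x3 = \<sigma>1 * \<gamma> * e - \<rho>1 * i" "x4 = \<sigma>2 * \<gamma> * e - \<rho>2 * j"
      "x5 \<ge> \<alpha>2 * (e + i + j) + 0.5 * \<alpha>3 * u1^2"
      using x unfolding xe Fset_def by auto
    obtain u2 where u2: "u2 \<in> {0..umax}" "y1 = - s * ?G u2" "y2 = s * ?G u2 - \<gamma> * e"
      "y3 = \<sigma>1 * \<gamma> * e - \<rho>1 * i" "y4 = \<sigma>2 * \<gamma> * e - \<rho>2 * j"
      "y5 \<ge> \<alpha>2 * (e + i + j) + 0.5 * \<alpha>3 * u2^2"
      using y unfolding ye Fset_def by auto
    obtain u where u: "u \<in> {0..umax}" "?G u = (1-t) * ?G u1 + t * ?G u2"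
      "u^2 \<le> (1-t) * u1^2 + t * u2^2"
      using key[of \<beta>1 i \<beta>2 j t u1 umax u2] assms pos t u1 u2 by auto
    have z5: "(1-t)*x5 + t*y5 \<ge> \<alpha>2 * (e + i + j) + 0.5 * \<alpha>3 * u^2"
    proof -
      have "(1-t)*x5 + t*y5 \<ge> (1-t)*(\<alpha>2 * (e + i + j) + 0.5 * \<alpha>3 * u1^2)
              + t*(\<alpha>2 * (e + i + j) + 0.5 * \<alpha>3 * u2^2)"
        using t u1(6) u2(6) by (intro add_mono mult_left_mono) auto
      moreover have "0.5 * \<alpha>3 * u^2 \<le> 0.5 * \<alpha>3 * ((1-t) * u1^2 + t * u2^2)"
        using u(3) assms(10) by simp
      moreover have "(1-t)*(\<alpha>2 * (e + i + j) + 0.5 * \<alpha>3 * u1^2)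
              + t*(\<alpha>2 * (e + i + j) + 0.5 * \<alpha>3 * u2^2) =
            \<alpha>2 * (e + i + j) + 0.5 * \<alpha>3 * ((1-t) * u1^2 + t * u2^2)"
        by (simp add: field_simps)
      ultimately show ?thesis by linarith
    qed
    show "(1 - t) *\<^sub>R x + t *\<^sub>R y \<in> Fset \<beta>1 \<beta>2 \<gamma> \<rho>1 \<rho>2 \<sigma>1 \<sigma>2 \<alpha>2 \<alpha>3 umax s e i j"
      unfolding xe ye Fset_def
      apply (simp only: scaleR_Pair mem_Collect_eq case_prod_conv plus_prod_def fst_conv snd_conv real_scaleR_def)
      apply (rule bexI[OF _ u(1)])
      apply (intro conjI)
      subgoal unfolding u1(2) u2(2) u(2) by (simp only: ring_distribs) simp
      subgoal unfolding u1(3) u2(3) u(2) by (simp add: algebra_simps)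
      subgoal unfolding u1(4) u2(4) by (simp add: algebra_simps)
      subgoal unfolding u1(5) u2(5) by (simp add: algebra_simps)
      subgoal using z5 by simp
      done
  qed
qed

end
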